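(* Let $N \ge 3$, let $0 \le z_1 < \dots < z_N < 1$ and let $\mu = \sum_{i=1}^N N^{-1}\delta_{z_i}$ be the uniform discrete probability distribution on $[0,1]$. Then the eigenvalues of the $\mu$-Laplacian $\Delta^\mu$ are $\lambda_l = -2N^2 + 2N^2\cos(2\pi l/N)$ for $l\in\{0,\dots,N-1\}$, with corresponding eigenfunctions $f_l \in \mathscr D^2_\mu$ given by: (1) $f_0$ is the constant function with value $1$; (2) for $0 < l < N/2$: $f_l|_{[0,z_1]\cup(z_N,1]} = 0$ and $f_l|_{(z_j,z_{j+1}]} = \operatorname{Im}\big(e^{2\pi\mathbf i\, jl/N}\big)$ for $j\in\{1,\dots,N-1\}$; (3) for $N/2 \le l \le N-1$: $f_l|_{[0,z_1]\cup(z_N,1]} = 1$ and $f_l|_{(z_j,z_{j+1}]} = \operatorname{Re}\big(e^{2\pi\mathbf i\, jl/N}\big)$ for $j\in\{1,\dots,N-1\}$.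
   Context: $\delta_z$ is the Dirac measure at $z$; $\mathbf i$ is the imaginary unit. $L^2_\mu$ is the space of $\mu$-a.e. classes of real square-integrable functions on $[0,1]$ with inner product $\langle f,g\rangle_\mu = \sum_{i=1}^N \alpha_i f(z_i)g(z_i)$ (here $\alpha_i = 1/N$). $\mathscr D^1_\mu$ is the set of functions $f$ on $[0,1]$ for which there is $f' \in L^2_\mu$ with $f(0)=f(1)$ and $f(x) = f(0) + \int \mathbf 1_{[0,x)} f'\,d\mu$ for all $x\in[0,1]$ (with $[0,0)=\emptyset$); then $\nabla^\mu f := f'$, explicitly $\nabla^\mu f(z_n) = (f(z_{n+1})-f(z_n))/\alpha_n$ for $n<N$ and $\nabla^\mu f(z_N) = (f(z_1)-f(z_N))/\alpha_N$. Every class of $L^2_\mu$ has a representative in $\mathscr D^1_\mu$. The energy form is $\mathcal E(f,g) = \langle \nabla^\mu f, \nabla^\mu g\rangle_\mu$. A function $f \in \mathscr D^1_\mu$ belongs to $\mathscr D^2_\mu$ if there is $h \in L^2_\mu$ with $\mathcal E(f,g) = -\langle h, g\rangle_\mu$ for all $g\in\mathscr D^1_\mu$, and then $\Delta^\mu f := h$. *)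

theory Defs
  imports "HOL-Analysis.Analysis"
begin

text \<open>Discrete uniform measure mu = sum_{i=1}^N (1/N) delta_{z i}, with atoms
  z 1 < ... < z N in [0,1).  Functions on [0,1] are represented as real => real
  (values outside [0,1] are irrelevant); an element of L^2_mu is represented by
  any function, two functions being equal in L^2_mu iff they agree at all z i.\<close>

definition mu_ip :: "nat \<Rightarrow> (nat \<Rightarrow> real) \<Rightarrow> (real \<Rightarrow> real) \<Rightarrow> (real \<Rightarrow> real) \<Rightarrow> real" where
  "mu_ip N z f g = (\<Sum>i\<in>{1..N}. (1 / real N) * f (z i) * g (z i))"

definition mu_int_below :: "nat \<Rightarrow> (nat \<Rightarrow> real) \<Rightarrow> (real \<Rightarrow> real) \<Rightarrow> real \<Rightarrow> real" where
  "mu_int_below N z g x = (\<Sum>i\<in>{1..N}. if 0 \<le> z i \<and> z i < x then (1 / real N) * g (z i) else 0)"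

definition D1 :: "nat \<Rightarrow> (nat \<Rightarrow> real) \<Rightarrow> (real \<Rightarrow> real) \<Rightarrow> bool" where
  "D1 N z f \<longleftrightarrow> f 0 = f 1 \<and>
     (\<exists>f'. \<forall>x\<in>{0..1}. f x = f 0 + mu_int_below N z f' x)"

definition mu_grad :: "nat \<Rightarrow> (nat \<Rightarrow> real) \<Rightarrow> (real \<Rightarrow> real) \<Rightarrow> nat \<Rightarrow> real" where
  "mu_grad N z f n =
     (if n < N then (f (z (Suc n)) - f (z n)) / (1 / real N)
      else (f (z 1) - f (z N)) / (1 / real N))"

definition energy :: "nat \<Rightarrow> (nat \<Rightarrow> real) \<Rightarrow> (real \<Rightarrow> real) \<Rightarrow> (real \<Rightarrow> real) \<Rightarrow> real" where
  "energy N z f g = (\<Sum>i\<in>{1..N}. (1 / real N) * mu_grad N z f i * mu_grad N z g i)"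

definition is_mu_laplacian :: "nat \<Rightarrow> (nat \<Rightarrow> real) \<Rightarrow> (real \<Rightarrow> real) \<Rightarrow> (real \<Rightarrow> real) \<Rightarrow> bool" where
  "is_mu_laplacian N z f h \<longleftrightarrow>
     (\<forall>g. D1 N z g \<longrightarrow> energy N z f g = - mu_ip N z h g)"

definition D2 :: "nat \<Rightarrow> (nat \<Rightarrow> real) \<Rightarrow> (real \<Rightarrow> real) \<Rightarrow> bool" where
  "D2 N z f \<longleftrightarrow> D1 N z f \<and> (\<exists>h. is_mu_laplacian N z f h)"

definition mu_nonzero :: "nat \<Rightarrow> (nat \<Rightarrow> real) \<Rightarrow> (real \<Rightarrow> real) \<Rightarrow> bool" where
  "mu_nonzero N z f \<longleftrightarrow> (\<exists>i\<in>{1..N}. f (z i) \<noteq> 0)"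

definition mu_eigenvalue :: "nat \<Rightarrow> (nat \<Rightarrow> real) \<Rightarrow> real \<Rightarrow> bool" where
  "mu_eigenvalue N z lam \<longleftrightarrow>
     (\<exists>f. D2 N z f \<and> mu_nonzero N z f \<and> is_mu_laplacian N z f (\<lambda>x. lam * f x))"

end

theory Submission
  imports Defs
begin


definition nx :: "nat \<Rightarrow> nat \<Rightarrow> nat" where "nx N i = (if i < N then Suc i else 1)"
definition pv :: "nat \<Rightarrow> nat \<Rightarrow> nat" where "pv N i = (if i = 1 then N else i - 1)"

lemma nx_bij: "1 \<le> N \<Longrightarrow> bij_betw (nx N) {1..N} {1..N}"
  by (rule bij_betw_byWitness[where f'="pv N"]) (auto simp: nx_def pv_def)

lemma pv_bij: "1 \<le> N \<Longrightarrow> bij_betw (pv N) {1..N} {1..N}"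
  by (rule bij_betw_byWitness[where f'="nx N"]) (auto simp: nx_def pv_def)

lemma sum_nx: "1 \<le> N \<Longrightarrow> (\<Sum>i\<in>{1..N}. g (nx N i)) = (\<Sum>i\<in>{1..N}. g i)"
  using sum.reindex_bij_betw[OF nx_bij, of N g] by simp

lemma sum_pv: "1 \<le> N \<Longrightarrow> (\<Sum>i\<in>{1..N}. g (pv N i)) = (\<Sum>i\<in>{1..N}. g i)"
  using sum.reindex_bij_betw[OF pv_bij, of N g] by simp

lemma telescope: "1 \<le> N \<Longrightarrow> j \<le> N \<Longrightarrow> (\<Sum>i=1..j. F (nx N i) - F i) = F (nx N j) - (F 1 :: real)"
proof (induction j)
  case 0 then show ?case by (simp add: nx_def)
next
  case (Suc j)
  then show ?case by (simp add: nx_def)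
qed

locale atoms =
  fixes N :: nat and z :: "nat \<Rightarrow> real"
  assumes N1: "1 \<le> N" and z0: "0 \<le> z 1" and zN: "z N < 1"
    and zmono: "\<forall>i\<in>{1..<N}. z i < z (Suc i)"
begin

lemma zlt: "1 \<le> i \<Longrightarrow> i < k \<Longrightarrow> k \<le> N \<Longrightarrow> z i < z k"
proof (induction k)
  case 0 then show ?case by simp
next
  case (Suc k)
  have s: "z k < z (Suc k)" using zmono Suc.prems by auto
  show ?case
  proof (cases "i = k")
    case True then show ?thesis using s by simp
  next
    case False then show ?thesis using Suc s by force
  qed
qed

lemma zle: "1 \<le> i \<Longrightarrow> i \<le> k \<Longrightarrow> k \<le> N \<Longrightarrow> z i \<le> z k"
  using zlt[of i k] by (cases "i = k") auto

lemma zinj: "inj_on z {1..N}"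
proof (rule inj_onI)
  fix a b assume a: "a \<in> {1..N}" and b: "b \<in> {1..N}" and e: "z a = z b"
  show "a = b"
  proof (rule ccontr)
    assume "a \<noteq> b"
    then have "a < b \<or> b < a" by auto
    then show False using zlt[of a b] zlt[of b a] a b e by auto
  qed
qed

lemma zge0: "i \<in> {1..N} \<Longrightarrow> 0 \<le> z i"
  using zle[of 1 i] z0 by auto

lemma zlt1: "i \<in> {1..N} \<Longrightarrow> z i < 1"
  using zle[of i N] zN by auto

lemma filt:
  assumes "j \<le> N" "j = 0 \<or> z j < x" "j = N \<or> x \<le> z (Suc j)"
  shows "{i\<in>{1..N}. 0 \<le> z i \<and> z i < x} = {1..j}"
proof (intro set_eqI iffI)
  fix i assume i: "i \<in> {i\<in>{1..N}. 0 \<le> z i \<and> z i < x}"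
  show "i \<in> {1..j}"
  proof (rule ccontr)
    assume "i \<notin> {1..j}"
    then have "j < i" using i by auto
    then have "j < N" "Suc j \<le> i" using i by auto
    then have "z (Suc j) \<le> z i" using zle[of "Suc j" i] i by auto
    then show False using assms(3) i \<open>j < N\<close> by auto
  qed
next
  fix i assume i: "i \<in> {1..j}"
  then have "j \<noteq> 0" by auto
  then have "z j < x" using assms(2) by auto
  moreover have "z i \<le> z j" using zle[of i j] i assms(1) by auto
  ultimately show "i \<in> {i\<in>{1..N}. 0 \<le> z i \<and> z i < x}"
    using i assms(1) zge0[of i] by auto
qed

lemma exj: "\<exists>j\<le>N. (j = 0 \<or> z j < x) \<and> (j = N \<or> x \<le> z (Suc j))"
proof -
  define S where "S = {i\<in>{1..N}. z i < x}"
  have fS: "finite S" unfolding S_def by auto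
  show ?thesis
  proof (cases "S = {}")
    case True
    then have "\<not> z 1 < x" using N1 unfolding S_def by auto
    then have "x \<le> z 1" by simp
    then show ?thesis by (intro exI[of _ 0]) auto
  next
    case False
    define j where "j = Max S"
    have jS: "j \<in> S" using Max_in[OF fS False] j_def by simp
    have "j = N \<or> x \<le> z (Suc j)"
    proof (cases "j = N")
      case False
      then have "j < N" using jS S_def by auto
      have "Suc j \<notin> S" using Max_ge[OF fS, of "Suc j"] j_def by auto
      then show ?thesis using \<open>j < N\<close> unfolding S_def by auto
    qed simp
    then show ?thesis using jS unfolding S_def by (intro exI[of _ j]) auto
  qed
qed

lemma mib:
  assumes "j \<le> N" "j = 0 \<or> z j < x" "j = N \<or> x \<le> z (Suc j)"
  shows "mu_int_below N z g x = (\<Sum>i=1..j. (1 / real N) * g (z i))"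
  unfolding mu_int_below_def
  using sum.inter_filter[of "{1..N}" "\<lambda>i. (1 / real N) * g (z i)" "\<lambda>i. 0 \<le> z i \<and> z i < x"]
    filt[OF assms] by simp


lemma mib_tel:
  assumes "j \<le> N" "j = 0 \<or> z j < x" "j = N \<or> x \<le> z (Suc j)"
  shows "mu_int_below N z (\<lambda>y. real N * (\<Phi> (nx N (inv_into {1..N} z y)) - \<Phi> (inv_into {1..N} z y))) x
         = \<Phi> (nx N j) - \<Phi> 1"
proof -
  have "mu_int_below N z (\<lambda>y. real N * (\<Phi> (nx N (inv_into {1..N} z y)) - \<Phi> (inv_into {1..N} z y))) x
     = (\<Sum>i=1..j. (1 / real N) * (real N * (\<Phi> (nx N (inv_into {1..N} z (z i))) - \<Phi> (inv_into {1..N} z (z i)))))"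
    by (rule mib[OF assms])
  also have "\<dots> = (\<Sum>i=1..j. \<Phi> (nx N i) - \<Phi> i)"
  proof (rule sum.cong)
    fix i assume "i \<in> {1..j}"
    then have "i \<in> {1..N}" using assms(1) by auto
    then have "inv_into {1..N} z (z i) = i" using inv_into_f_f[OF zinj] by blast
    then show "(1 / real N) * (real N * (\<Phi> (nx N (inv_into {1..N} z (z i))) - \<Phi> (inv_into {1..N} z (z i))))
        = \<Phi> (nx N i) - \<Phi> i" using N1 by simp
  qed simp
  also have "\<dots> = \<Phi> (nx N j) - \<Phi> 1" by (rule telescope[OF N1 assms(1)])
  finally show ?thesis .
qed

lemma D1_of_vals:
  assumes out: "\<forall>x\<in>{0..1}. x \<le> z 1 \<or> z N < x \<longrightarrow> \<phi> x = \<phi> 0"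
    and inn: "\<forall>j\<in>{1..N-1}. \<forall>x. z j < x \<and> x \<le> z (Suc j) \<longrightarrow> \<phi> x = \<phi> (z (Suc j))"
  shows "D1 N z \<phi>"
proof -
  have z1: "z 1 \<in> {0..1}" using z0 zlt1[of 1] N1 by auto
  have p1: "\<phi> 1 = \<phi> 0" using out zN by (meson atLeastAtMost_iff order_refl zero_le_one)
  have pz1: "\<phi> (z 1) = \<phi> 0" using out z1 by blast
  let ?g = "\<lambda>y. real N * ((\<phi> \<circ> z) (nx N (inv_into {1..N} z y)) - (\<phi> \<circ> z) (inv_into {1..N} z y))"
  have main: "\<forall>x\<in>{0..1}. \<phi> x = \<phi> 0 + mu_int_below N z ?g x"
  proof
    fix x :: real assume x: "x \<in> {0..1}"
    obtain j where j: "j \<le> N" "j = 0 \<or> z j < x" "j = N \<or> x \<le> z (Suc j)" using exj by blast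
    have m: "mu_int_below N z ?g x = \<phi> (z (nx N j)) - \<phi> (z 1)"
      using mib_tel[OF j, of "\<phi> \<circ> z"] by simp
    show "\<phi> x = \<phi> 0 + mu_int_below N z ?g x"
    proof (cases "j = 0")
      case True
      then have "x \<le> z 1" using j N1 by auto
      then have "\<phi> x = \<phi> 0" using out x by blast
      then show ?thesis using m True pz1 by (simp add: nx_def)
    next
      case False
      show ?thesis
      proof (cases "j = N")
        case True
        then have "z N < x" using j False by auto
        then have "\<phi> x = \<phi> 0" using out x by blast
        then show ?thesis using m True pz1 by (simp add: nx_def)
      next
        case False2: False
        then have jj: "j \<in> {1..N-1}" "z j < x" "x \<le> z (Suc j)" using j False by auto
        then have "\<phi> x = \<phi> (z (Suc j))" using inn by blast
        then show ?thesis using m pz1 jj False2 j(1) by (simp add: nx_def)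
      qed
    qed
  qed
  show ?thesis unfolding D1_def
  proof (intro conjI exI)
    show "\<phi> 0 = \<phi> 1" using p1 by simp
    show "\<forall>x\<in>{0..1}. \<phi> x = \<phi> 0 + mu_int_below N z ?g x" by (rule main)
  qed
qed

lemma test_fun: "\<exists>g. D1 N z g \<and> (\<forall>k\<in>{1..N}. g (z k) = G k)"
proof -
  let ?g' = "\<lambda>y. real N * (G (nx N (inv_into {1..N} z y)) - G (inv_into {1..N} z y))"
  define g where "g x = G 1 + mu_int_below N z ?g' x" for x
  have g0: "g 0 = G 1"
    using mib_tel[of 0 0 G] z0 N1 unfolding g_def by (simp add: nx_def)
  have g1: "g 1 = G 1"
    using mib_tel[of N 1 G] zN N1 unfolding g_def by (simp add: nx_def)
  have gk: "g (z k) = G k" if k: "k \<in> {1..N}" for k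
  proof -
    have c1: "k - 1 \<le> N" using k by auto
    have c2: "k - 1 = 0 \<or> z (k - 1) < z k"
    proof (cases "k = 1")
      case False
      then show ?thesis using k zlt[of "k-1" k] by auto
    qed simp
    have c3: "k - 1 = N \<or> z k \<le> z (Suc (k - 1))" using k by auto
    note c = c1 c2 c3
    have nk: "nx N (k - 1) = k" using k by (auto simp: nx_def)
    show ?thesis using mib_tel[OF c, of G] unfolding g_def nk by simp
  qed
  have gm: "\<forall>x\<in>{0..1}. g x = g 0 + mu_int_below N z ?g' x" using g0 by (simp add: g_def)
  have "D1 N z g" unfolding D1_def
  proof (intro conjI exI)
    show "g 0 = g 1" using g0 g1 by simp
    show "\<forall>x\<in>{0..1}. g x = g 0 + mu_int_below N z ?g' x" by (rule gm)
  qed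
  then show ?thesis using gk by blast
qed

end

lemma grad_eq: "i \<in> {1..N} \<Longrightarrow> mu_grad N z f i = real N * (f (z (nx N i)) - f (z i))"
  by (auto simp: mu_grad_def nx_def)

lemma energy_eq:
  assumes N1: "1 \<le> N"
  shows "energy N z f g = real N * (\<Sum>i\<in>{1..N}. g (z i) * (2 * f (z i) - f (z (nx N i)) - f (z (pv N i))))"
proof -
  define F where "F i = f (z i)" for i
  define G where "G i = g (z i)" for i
  have "energy N z f g = real N * (\<Sum>i\<in>{1..N}. ((F (nx N i) - F i) * (G (nx N i) - G i)))"
    unfolding energy_def F_def G_def sum_distrib_left using N1 by (intro sum.cong) (auto simp: grad_eq)
  also have "(\<Sum>i\<in>{1..N}. ((F (nx N i) - F i) * (G (nx N i) - G i)))
     = (\<Sum>i\<in>{1..N}. F (nx N i) * G (nx N i) - F (nx N i) * G i - F i * G (nx N i) + F i * G i)"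
    by (rule sum.cong) (simp_all add: algebra_simps)
  also have "\<dots> = (\<Sum>i\<in>{1..N}. F (nx N i) * G (nx N i)) - (\<Sum>i\<in>{1..N}. F (nx N i) * G i)
        - (\<Sum>i\<in>{1..N}. F i * G (nx N i)) + (\<Sum>i\<in>{1..N}. F i * G i)"
    by (simp add: sum.distrib sum_subtractf)
  also have "(\<Sum>i\<in>{1..N}. F (nx N i) * G (nx N i)) = (\<Sum>i\<in>{1..N}. F i * G i)"
    using sum_nx[OF N1, of "\<lambda>i. F i * G i"] by simp
  also have "(\<Sum>i\<in>{1..N}. F i * G (nx N i)) = (\<Sum>i\<in>{1..N}. F (pv N i) * G i)"
  proof -
    have "(\<Sum>i\<in>{1..N}. F i * G (nx N i)) = (\<Sum>i\<in>{1..N}. F (pv N i) * G (nx N (pv N i)))"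
      using sum_pv[OF N1, of "\<lambda>i. F i * G (nx N i)"] by simp
    also have "\<dots> = (\<Sum>i\<in>{1..N}. F (pv N i) * G i)"
      by (intro sum.cong) (auto simp: nx_def pv_def)
    finally show ?thesis .
  qed
  also have "(\<Sum>i\<in>{1..N}. F i * G i) - (\<Sum>i\<in>{1..N}. F (nx N i) * G i)
        - (\<Sum>i\<in>{1..N}. F (pv N i) * G i) + (\<Sum>i\<in>{1..N}. F i * G i)
     = (\<Sum>i\<in>{1..N}. F i * G i - F (nx N i) * G i - F (pv N i) * G i + F i * G i)"
    by (simp only: sum.distrib sum_subtractf)
  also have "\<dots> = (\<Sum>i\<in>{1..N}. G i * (2 * F i - F (nx N i) - F (pv N i)))"
    by (rule sum.cong) (simp_all add: algebra_simps)
  finally show ?thesis unfolding F_def G_def .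
qed

context atoms begin

lemma lap_iff:
  "is_mu_laplacian N z f h \<longleftrightarrow>
     (\<forall>k\<in>{1..N}. h (z k) = real N ^ 2 * (f (z (nx N k)) - 2 * f (z k) + f (z (pv N k))))"
proof
  assume H: "\<forall>k\<in>{1..N}. h (z k) = real N ^ 2 * (f (z (nx N k)) - 2 * f (z k) + f (z (pv N k)))"
  show "is_mu_laplacian N z f h"
    unfolding is_mu_laplacian_def
  proof (intro allI impI)
    fix g
    have "- mu_ip N z h g = real N * (\<Sum>i\<in>{1..N}. g (z i) * (2 * f (z i) - f (z (nx N i)) - f (z (pv N i))))"
      unfolding mu_ip_def sum_distrib_left sum_negf[symmetric]
    proof (rule sum.cong)
      fix i assume i: "i \<in> {1..N}"
      then have hi: "h (z i) = real N ^ 2 * (f (z (nx N i)) - 2 * f (z i) + f (z (pv N i)))" using H by blast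
      show "- (1 / real N * h (z i) * g (z i)) = real N * (g (z i) * (2 * f (z i) - f (z (nx N i)) - f (z (pv N i))))"
        unfolding hi using N1 by (simp add: power2_eq_square field_simps)
    qed simp
    then show "energy N z f g = - mu_ip N z h g" using energy_eq[OF N1] by simp
  qed
next
  assume L: "is_mu_laplacian N z f h"
  show "\<forall>k\<in>{1..N}. h (z k) = real N ^ 2 * (f (z (nx N k)) - 2 * f (z k) + f (z (pv N k)))"
  proof
    fix k assume k: "k \<in> {1..N}"
    obtain g where g: "D1 N z g" "\<forall>i\<in>{1..N}. g (z i) = (if i = k then 1 else 0)"
      using test_fun[of "\<lambda>i. if i = k then 1 else 0"] by blast
    have e: "energy N z f g = real N * (2 * f (z k) - f (z (nx N k)) - f (z (pv N k)))"
    proof -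
      have "energy N z f g = real N * (\<Sum>i\<in>{1..N}. if i = k then (2 * f (z i) - f (z (nx N i)) - f (z (pv N i))) else 0)"
        unfolding energy_eq[OF N1] using g(2) by (intro arg_cong[where f="\<lambda>t. real N * t"] sum.cong) auto
      then show ?thesis using k by simp
    qed
    have m: "mu_ip N z h g = (1 / real N) * h (z k)"
    proof -
      have "mu_ip N z h g = (\<Sum>i\<in>{1..N}. if i = k then (1 / real N) * h (z i) else 0)"
        unfolding mu_ip_def using g(2) by (intro sum.cong) auto
      then show ?thesis using k by simp
    qed
    have "energy N z f g = - mu_ip N z h g" using L g(1) unfolding is_mu_laplacian_def by blast
    then show "h (z k) = real N ^ 2 * (f (z (nx N k)) - 2 * f (z k) + f (z (pv N k)))"
      using e m N1 by (simp add: power2_eq_square field_simps)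
  qed
qed

end


lemma cis_ne1:
  fixes d N :: nat
  assumes "0 < d" "d < 2 * N" "d \<noteq> N"
  shows "cis (real d * (- 2 * pi / real N)) \<noteq> 1"
proof
  assume c: "cis (real d * (- 2 * pi / real N)) = 1"
  have N0: "N > 0" using assms by auto
  have "cos (real d * (- 2 * pi / real N)) = 1" using arg_cong[OF c, of Re] by simp
  then obtain n :: int where n: "real d * (- 2 * pi / real N) = real_of_int n * 2 * pi"
    using cos_one_2pi_int by blast
  have "- (pi * real d) = pi * (real_of_int n * real N)" using n N0 by (simp add: field_simps)
  then have "pi * (- real d) = pi * (real_of_int n * real N)" by simp
  then have "- real d = real_of_int n * real N" using pi_neq_zero mult_left_cancel by blast
  then have "real d = real_of_int (- n) * real N" by simp
  then have e: "int d = (- n) * int N" by (metis of_int_eq_iff of_int_mult of_int_of_nat_eq)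
  define c where "c = - n"
  have e2: "int d = c * int N" using e c_def by simp
  show False
  proof (cases "c \<le> 0")
    case True
    then have "c * int N \<le> 0" by (simp add: mult_nonpos_nonneg)
    then show False using e2 assms(1) by linarith
  next
    case False
    show False
    proof (cases "c \<ge> 2")
      case True
      then have "2 * int N \<le> c * int N" by (simp add: mult_right_mono)
      then show False using e2 assms(2) by linarith
    next
      case False2: False
      then have "c = 1" using False by linarith
      then show False using e2 assms(3) by simp
    qed
  qed
qed

lemma dft:
  fixes F :: "nat \<Rightarrow> real" and lam :: real
  assumes N1: "1 \<le> N"
    and rec: "\<forall>k\<in>{1..N}. lam * F k = real N ^ 2 * (F (nx N k) - 2 * F k + F (pv N k))"
    and nz: "\<exists>k\<in>{1..N}. F k \<noteq> 0"
  shows "\<exists>l<N. lam = - 2 * real N ^ 2 + 2 * real N ^ 2 * cos (2 * pi * real l / real N)"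
proof -
  define \<zeta> where "\<zeta> = cis (- 2 * pi / real N)"
  have zpow: "\<zeta> ^ n = cis (real n * (- 2 * pi / real N))" for n
    unfolding \<zeta>_def by (simp only: Complex.DeMoivre)
  have zN: "\<zeta> ^ N = 1" unfolding zpow using N1 by (simp add: cis.ctr complex_eq_iff)
  define C where "C l = (\<Sum>k\<in>{1..N}. complex_of_real (F k) * (\<zeta> ^ l) ^ k)" for l
  have eig: "lam = - 2 * real N ^ 2 + 2 * real N ^ 2 * cos (2 * pi * real l / real N)"
    if Cl: "C l \<noteq> 0" for l
  proof -
    define \<rho> where "\<rho> = \<zeta> ^ l"
    have rN: "\<rho> ^ N = 1" unfolding \<rho>_def by (metis power_mult mult.commute power_one zN)
    have r0: "\<rho> \<noteq> 0" using rN N1 by (metis power_0_left not_one_le_zero zero_neq_one le_antisym power_eq_0_iff)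
    have pnx: "\<rho> ^ (nx N k) = \<rho> * \<rho> ^ k" if "k \<in> {1..N}" for k
      using that rN by (auto simp: nx_def)
    have ppv: "\<rho> ^ k = \<rho> * \<rho> ^ (pv N k)" if "k \<in> {1..N}" for k
    proof (cases "k = 1")
      case True then show ?thesis using rN by (simp add: pv_def)
    next
      case False
      then have "k = Suc (k - 1)" using that by auto
      then show ?thesis using False by (metis power_Suc pv_def)
    qed
    have Cr: "C l = (\<Sum>k\<in>{1..N}. complex_of_real (F k) * \<rho> ^ k)" unfolding C_def \<rho>_def ..
    define Snx where "Snx = (\<Sum>k\<in>{1..N}. complex_of_real (F (nx N k)) * \<rho> ^ k)"
    define Spv where "Spv = (\<Sum>k\<in>{1..N}. complex_of_real (F (pv N k)) * \<rho> ^ k)"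
    have hnx: "\<rho> * Snx = C l"
    proof -
      have "\<rho> * Snx = (\<Sum>k\<in>{1..N}. complex_of_real (F (nx N k)) * \<rho> ^ (nx N k))"
        unfolding Snx_def sum_distrib_left by (rule sum.cong) (simp_all add: pnx)
      also have "\<dots> = C l" unfolding Cr by (rule sum_nx[OF N1, of "\<lambda>k. complex_of_real (F k) * \<rho> ^ k"])
      finally show ?thesis .
    qed
    have hpv: "Spv = \<rho> * C l"
    proof -
      have "Spv = (\<Sum>k\<in>{1..N}. \<rho> * (complex_of_real (F (pv N k)) * \<rho> ^ (pv N k)))"
        unfolding Spv_def by (rule sum.cong) (simp_all add: ppv)
      also have "\<dots> = \<rho> * C l" unfolding Cr sum_distrib_left[symmetric]
        using sum_pv[OF N1, of "\<lambda>k. complex_of_real (F k) * \<rho> ^ k"] by simp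
      finally show ?thesis .
    qed
    have "complex_of_real lam * C l = (\<Sum>k\<in>{1..N}. complex_of_real (lam * F k) * \<rho> ^ k)"
      unfolding Cr sum_distrib_left by (rule sum.cong) simp_all
    also have "\<dots> = (\<Sum>k\<in>{1..N}. complex_of_real (real N ^ 2) * (complex_of_real (F (nx N k)) * \<rho> ^ k
          - 2 * (complex_of_real (F k) * \<rho> ^ k) + complex_of_real (F (pv N k)) * \<rho> ^ k))"
    proof (rule sum.cong)
      fix k assume k: "k \<in> {1..N}"
      have h: "lam * F k = real N ^ 2 * (F (nx N k) - 2 * F k + F (pv N k))" using rec k by blast
      show "complex_of_real (lam * F k) * \<rho> ^ k = complex_of_real (real N ^ 2) * (complex_of_real (F (nx N k)) * \<rho> ^ k
          - 2 * (complex_of_real (F k) * \<rho> ^ k) + complex_of_real (F (pv N k)) * \<rho> ^ k)"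
        unfolding h by (simp add: algebra_simps)
    qed simp
    also have "\<dots> = complex_of_real (real N ^ 2) * (Snx - 2 * C l + Spv)"
      unfolding Snx_def Spv_def Cr sum_distrib_left[symmetric]
      by (simp add: sum.distrib sum_subtractf sum_distrib_left)
    finally have e1: "complex_of_real lam * C l = complex_of_real (real N ^ 2) * (Snx - 2 * C l + Spv)" .
    have "\<rho> * (complex_of_real lam * C l) = complex_of_real (real N ^ 2) * (\<rho> * Snx - 2 * \<rho> * C l + \<rho> * Spv)"
      unfolding e1 by (simp add: algebra_simps)
    also have "\<dots> = complex_of_real (real N ^ 2) * (C l - 2 * \<rho> * C l + \<rho> * \<rho> * C l)"
      unfolding hnx hpv by simp
    finally have "(\<rho> * complex_of_real lam) * C l = (complex_of_real (real N ^ 2) * (1 - 2 * \<rho> + \<rho> * \<rho>)) * C l"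
      by (simp add: algebra_simps)
    then have e2: "\<rho> * complex_of_real lam = complex_of_real (real N ^ 2) * (1 - 2 * \<rho> + \<rho> * \<rho>)"
      using Cl by simp
    define \<theta> where "\<theta> = 2 * pi * real l / real N"
    have rc: "\<rho> = cis (- \<theta>)" unfolding \<rho>_def zpow \<theta>_def by (simp add: algebra_simps)
    have ci: "cis \<theta> * cis (- \<theta>) = 1" by (simp add: cis_mult)
    have "complex_of_real lam = cis \<theta> * (\<rho> * complex_of_real lam)"
      using ci rc by (simp add: algebra_simps)
    also have "\<dots> = cis \<theta> * (complex_of_real (real N ^ 2) * (1 - 2 * \<rho> + \<rho> * \<rho>))"
      by (simp only: e2)
    also have "\<dots> = complex_of_real (real N ^ 2) * (cis \<theta> - 2 * (cis \<theta> * \<rho>) + (cis \<theta> * \<rho>) * \<rho>)"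
      by (simp add: algebra_simps)
    also have "\<dots> = complex_of_real (real N ^ 2) * (cis \<theta> - 2 + cis (- \<theta>))"
      using ci rc by simp
    finally have "lam = Re (complex_of_real (real N ^ 2) * (cis \<theta> - 2 + cis (- \<theta>)))"
      by (metis Re_complex_of_real)
    also have "\<dots> = real N ^ 2 * (2 * cos \<theta> - 2)" by simp
    finally show ?thesis unfolding \<theta>_def by (simp add: algebra_simps)
  qed
  show ?thesis
  proof (rule ccontr)
    assume "\<not> ?thesis"
    then have C0: "\<forall>l<N. C l = 0" using eig by blast
    obtain m where m: "m \<in> {1..N}" "F m \<noteq> 0" using nz by blast
    have inner: "(\<Sum>l<N. (\<zeta> ^ (k + N - m)) ^ l) = (if k = m then of_nat N else 0)"
      if k: "k \<in> {1..N}" for k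
    proof (cases "k = m")
      case True
      then show ?thesis using m zN by simp
    next
      case False
      have q1: "\<zeta> ^ (k + N - m) \<noteq> 1" unfolding zpow
        by (rule cis_ne1) (use k m False in auto)
      have "(\<zeta> ^ (k + N - m)) ^ N = 1" by (metis power_mult mult.commute power_one zN)
      then show ?thesis using False q1 by (simp add: geometric_sum)
    qed
    have "0 = (\<Sum>l<N. C l * \<zeta> ^ (l * (N - m)))" using C0 by simp
    also have "\<dots> = (\<Sum>l<N. \<Sum>k\<in>{1..N}. complex_of_real (F k) * (\<zeta> ^ (k + N - m)) ^ l)"
    proof (rule sum.cong)
      fix l assume "l \<in> {..<N}"
      show "C l * \<zeta> ^ (l * (N - m)) = (\<Sum>k\<in>{1..N}. complex_of_real (F k) * (\<zeta> ^ (k + N - m)) ^ l)"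
        unfolding C_def sum_distrib_right
      proof (rule sum.cong)
        fix k assume "k \<in> {1..N}"
        have "(\<zeta> ^ l) ^ k * \<zeta> ^ (l * (N - m)) = \<zeta> ^ (l * k + l * (N - m))"
          by (simp add: power_mult power_add)
        also have "l * k + l * (N - m) = (k + N - m) * l" using m by (simp add: algebra_simps)
        also have "\<zeta> ^ ((k + N - m) * l) = (\<zeta> ^ (k + N - m)) ^ l" by (simp add: power_mult)
        finally show "complex_of_real (F k) * (\<zeta> ^ l) ^ k * \<zeta> ^ (l * (N - m))
            = complex_of_real (F k) * (\<zeta> ^ (k + N - m)) ^ l" by (simp add: mult.assoc)
      qed simp
    qed simp
    also have "\<dots> = (\<Sum>k\<in>{1..N}. complex_of_real (F k) * (\<Sum>l<N. (\<zeta> ^ (k + N - m)) ^ l))"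
      by (simp add: sum.swap[of _ "{..<N}"] sum_distrib_left)
    also have "\<dots> = (\<Sum>k\<in>{1..N}. if k = m then complex_of_real (F k) * of_nat N else 0)"
      by (rule sum.cong) (simp_all add: inner)
    also have "\<dots> = complex_of_real (F m) * of_nat N" using m by simp
    finally show False using m N1 by simp
  qed
qed



lemma trig_shift:
  fixes l :: nat
  shows "sin (x + 2 * pi * real l) = sin x" "cos (x + 2 * pi * real l) = cos x"
    "sin (2 * pi * real l) = 0" "cos (2 * pi * real l) = 1"
proof -
  have a: "sin (2 * pi * real l) = 0" using sin_int_2pin[of "int l"] by simp
  have b: "cos (2 * pi * real l) = 1" using cos_int_2pin[of "int l"] by simp
  show "sin (x + 2 * pi * real l) = sin x" "cos (x + 2 * pi * real l) = cos x"
    "sin (2 * pi * real l) = 0" "cos (2 * pi * real l) = 1"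
    using a b by (simp_all add: sin_add cos_add)
qed

lemma rec_trig:
  fixes s :: "real \<Rightarrow> real"
  assumes "s = sin \<or> s = cos"
  shows "s (a + t) + s (a - t) = 2 * cos t * s a"
  using assms by (auto simp: sin_add sin_diff cos_add cos_diff)

theorem corollary4p2:
  fixes N :: nat and z :: "nat \<Rightarrow> real" and f :: "nat \<Rightarrow> real \<Rightarrow> real"
  assumes N3: "N \<ge> 3"
    and z0: "0 \<le> z 1" and zN: "z N < 1"
    and zmono: "\<forall>i\<in>{1..<N}. z i < z (Suc i)"
    and f0: "\<forall>x\<in>{0..1}. f 0 x = 1"
    and f_low_out: "\<forall>l. 0 < l \<and> 2 * l < N \<longrightarrow>
          (\<forall>x\<in>{0..1}. x \<le> z 1 \<or> z N < x \<longrightarrow> f l x = 0)"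
    and f_low_in: "\<forall>l. 0 < l \<and> 2 * l < N \<longrightarrow>
          (\<forall>j\<in>{1..N-1}. \<forall>x. z j < x \<and> x \<le> z (Suc j) \<longrightarrow>
              f l x = Im (exp (2 * of_real pi * \<i> * of_nat j * of_nat l / of_nat N)))"
    and f_high_out: "\<forall>l. N \<le> 2 * l \<and> l \<le> N - 1 \<longrightarrow>
          (\<forall>x\<in>{0..1}. x \<le> z 1 \<or> z N < x \<longrightarrow> f l x = 1)"
    and f_high_in: "\<forall>l. N \<le> 2 * l \<and> l \<le> N - 1 \<longrightarrow>
          (\<forall>j\<in>{1..N-1}. \<forall>x. z j < x \<and> x \<le> z (Suc j) \<longrightarrow>
              f l x = Re (exp (2 * of_real pi * \<i> * of_nat j * of_nat l / of_nat N)))"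
  shows "(\<forall>l<N. D2 N z (f l) \<and> mu_nonzero N z (f l) \<and>
            is_mu_laplacian N z (f l)
              (\<lambda>x. (- 2 * real N ^ 2 + 2 * real N ^ 2 * cos (2 * pi * real l / real N)) * f l x))
       \<and> {lam. mu_eigenvalue N z lam} =
           (\<lambda>l. - 2 * real N ^ 2 + 2 * real N ^ 2 * cos (2 * pi * real l / real N)) ` {..<N}"
proof -
  have N1: "1 \<le> N" using N3 by simp
  interpret A: atoms N z using N1 z0 zN zmono by unfold_locales
  define \<theta> where "\<theta> l = 2 * pi * real l / real N" for l
  define s :: "nat \<Rightarrow> real \<Rightarrow> real" where "s l = (if 0 < l \<and> 2 * l < N then sin else cos)" for l
  define V where "V l k = s l (real (k - 1) * \<theta> l)" for l k
  have sc: "s l = sin \<or> s l = cos" for l unfolding s_def by auto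
  have zin: "x \<in> {0..1}" if "z j < x" "x \<le> z (Suc j)" "j \<in> {1..N-1}" for x j
  proof -
    have "1 \<le> j" "Suc j \<le> N" using that(3) N1 by auto
    then have "0 \<le> z j" "z (Suc j) \<le> z N" using A.zge0[of j] A.zle[of "Suc j" N] by auto
    then show ?thesis using that zN by auto
  qed
  have z01: "z k \<in> {0..1}" if "k \<in> {1..N}" for k using that A.zge0 A.zlt1 by force
  have expIm: "Im (exp (2 * of_real pi * \<i> * of_nat j * of_nat l / of_nat N)) = sin (real j * \<theta> l)" for j l
    unfolding \<theta>_def by (simp add: Im_exp Re_exp algebra_simps)
  have expRe: "Re (exp (2 * of_real pi * \<i> * of_nat j * of_nat l / of_nat N)) = cos (real j * \<theta> l)" for j l
    unfolding \<theta>_def by (simp add: Im_exp Re_exp algebra_simps)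
  have fval: "f l (z k) = V l k" if l: "l < N" and k: "k \<in> {1..N}" for l k
  proof -
    consider (zero) "l = 0" | (low) "0 < l \<and> 2 * l < N" | (high) "N \<le> 2 * l \<and> l \<le> N - 1"
      using l by linarith
    then show ?thesis
    proof cases
      case zero
      then show ?thesis using f0 z01[OF k] by (simp add: V_def s_def \<theta>_def)
    next
      case low
      show ?thesis
      proof (cases "k = 1")
        case True
        then show ?thesis using f_low_out low z01[OF k] by (simp add: V_def s_def)
      next
        case False
        then have j: "k - 1 \<in> {1..N-1}" "z (k - 1) < z k" "z k \<le> z (Suc (k - 1))"
          using k A.zlt[of "k-1" k] by auto
        then have "f l (z k) = Im (exp (2 * of_real pi * \<i> * of_nat (k - 1) * of_nat l / of_nat N))"
          using f_low_in low by blast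
        then show ?thesis using low by (simp add: expIm V_def s_def)
      qed
    next
      case high
      then have nl: "\<not> (0 < l \<and> 2 * l < N)" by auto
      show ?thesis
      proof (cases "k = 1")
        case True
        then show ?thesis using f_high_out high z01[OF k] nl by (simp add: V_def s_def)
      next
        case False
        then have j: "k - 1 \<in> {1..N-1}" "z (k - 1) < z k" "z k \<le> z (Suc (k - 1))"
          using k A.zlt[of "k-1" k] by auto
        then have "f l (z k) = Re (exp (2 * of_real pi * \<i> * of_nat (k - 1) * of_nat l / of_nat N))"
          using f_high_in high by blast
        then show ?thesis using nl by (auto simp: expRe V_def s_def)
      qed
    qed
  qed
  have vrec: "V l (nx N k) + V l (pv N k) = 2 * cos (\<theta> l) * V l k" if k: "k \<in> {1..N}" for l k
  proof -
    define a where "a = real (k - 1) * \<theta> l"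
    have Nt: "real N * \<theta> l = 2 * pi * real l" unfolding \<theta>_def using N1 by simp
    have n: "V l (nx N k) = s l (a + \<theta> l)"
    proof (cases "k < N")
      case True
      then show ?thesis using k by (simp add: nx_def V_def a_def of_nat_diff algebra_simps)
    next
      case False
      then have "k = N" using k by auto
      then have "a + \<theta> l = real N * \<theta> l" using k by (simp add: a_def of_nat_diff algebra_simps)
      then have "s l (a + \<theta> l) = s l 0" unfolding Nt using sc[of l] trig_shift(3,4)[of l] by auto
      then show ?thesis using False by (simp add: nx_def V_def)
    qed
    have p: "V l (pv N k) = s l (a - \<theta> l)"
    proof (cases "k = 1")
      case False
      then have "k \<ge> 2" using k by auto
      then have "real (k - 1 - 1) * \<theta> l = a - \<theta> l" by (simp add: a_def of_nat_diff algebra_simps)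
      then show ?thesis using False by (simp add: pv_def V_def)
    next
      case True
      then have "real (N - 1) * \<theta> l = (a - \<theta> l) + 2 * pi * real l"
        using N1 Nt by (simp add: a_def of_nat_diff algebra_simps)
      then have "s l (real (N - 1) * \<theta> l) = s l (a - \<theta> l)"
        using sc[of l] trig_shift(1,2)[where x="a - \<theta> l" and l=l] by auto
      then show ?thesis using True by (simp add: pv_def V_def)
    qed
    show ?thesis unfolding n p using rec_trig[OF sc[of l]] by (simp add: V_def a_def)
  qed
  define lamf where "lamf l = - 2 * real N ^ 2 + 2 * real N ^ 2 * cos (2 * pi * real l / real N)" for l
  have lap: "is_mu_laplacian N z (f l) (\<lambda>x. lamf l * f l x)" if l: "l < N" for l
    unfolding A.lap_iff
  proof
    fix k assume k: "k \<in> {1..N}"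
    have nk: "nx N k \<in> {1..N}" "pv N k \<in> {1..N}" using k by (auto simp: nx_def pv_def)
    show "lamf l * f l (z k) = real N ^ 2 * (f l (z (nx N k)) - 2 * f l (z k) + f l (z (pv N k)))"
      unfolding fval[OF l k] fval[OF l nk(1)] fval[OF l nk(2)]
      using vrec[OF k, of l] unfolding lamf_def \<theta>_def by (simp add: algebra_simps)
  qed
  have d1: "D1 N z (f l)" if l: "l < N" for l
  proof -
    consider (zero) "l = 0" | (low) "0 < l \<and> 2 * l < N" | (high) "N \<le> 2 * l \<and> l \<le> N - 1"
      using l by linarith
    then show ?thesis
    proof cases
      case zero
      have o: "\<forall>x\<in>{0..1}. x \<le> z 1 \<or> z N < x \<longrightarrow> f l x = f l 0" using f0 zero by simp
      have i: "\<forall>j\<in>{1..N-1}. \<forall>x. z j < x \<and> x \<le> z (Suc j) \<longrightarrow> f l x = f l (z (Suc j))"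
      proof (intro ballI allI impI)
        fix j x assume j: "j \<in> {1..N-1}" and x: "z j < x \<and> x \<le> z (Suc j)"
        have "x \<in> {0..1}" using zin[of j x] j x by blast
        moreover have "z (Suc j) \<in> {0..1}" using zin[of j "z (Suc j)"] j x by auto
        ultimately show "f l x = f l (z (Suc j))" using f0 zero by simp
      qed
      show ?thesis by (rule A.D1_of_vals[OF o i])
    next
      case low
      have f00: "f l 0 = 0" using f_low_out low z0 by simp
      have o: "\<forall>x\<in>{0..1}. x \<le> z 1 \<or> z N < x \<longrightarrow> f l x = f l 0" using f_low_out low f00 by simp
      have i: "\<forall>j\<in>{1..N-1}. \<forall>x. z j < x \<and> x \<le> z (Suc j) \<longrightarrow> f l x = f l (z (Suc j))"
      proof (intro ballI allI impI)
        fix j x assume j: "j \<in> {1..N-1}" and x: "z j < x \<and> x \<le> z (Suc j)"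
        have zz: "z j < z (Suc j) \<and> z (Suc j) \<le> z (Suc j)" using x by auto
        have e1: "f l x = Im (exp (2 * of_real pi * \<i> * of_nat j * of_nat l / of_nat N))"
          using f_low_in low j x by blast
        have e2: "f l (z (Suc j)) = Im (exp (2 * of_real pi * \<i> * of_nat j * of_nat l / of_nat N))"
          using f_low_in low j zz by blast
        show "f l x = f l (z (Suc j))" using e1 e2 by simp
      qed
      show ?thesis by (rule A.D1_of_vals[OF o i])
    next
      case high
      have f00: "f l 0 = 1" using f_high_out high z0 by simp
      have o: "\<forall>x\<in>{0..1}. x \<le> z 1 \<or> z N < x \<longrightarrow> f l x = f l 0" using f_high_out high f00 by simp
      have i: "\<forall>j\<in>{1..N-1}. \<forall>x. z j < x \<and> x \<le> z (Suc j) \<longrightarrow> f l x = f l (z (Suc j))"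
      proof (intro ballI allI impI)
        fix j x assume j: "j \<in> {1..N-1}" and x: "z j < x \<and> x \<le> z (Suc j)"
        have zz: "z j < z (Suc j) \<and> z (Suc j) \<le> z (Suc j)" using x by auto
        have e1: "f l x = Re (exp (2 * of_real pi * \<i> * of_nat j * of_nat l / of_nat N))"
          using f_high_in high j x by blast
        have e2: "f l (z (Suc j)) = Re (exp (2 * of_real pi * \<i> * of_nat j * of_nat l / of_nat N))"
          using f_high_in high j zz by blast
        show "f l x = f l (z (Suc j))" using e1 e2 by simp
      qed
      show ?thesis by (rule A.D1_of_vals[OF o i])
    qed
  qed
  have nzr: "mu_nonzero N z (f l)" if l: "l < N" for l
  proof (cases "0 < l \<and> 2 * l < N")
    case True
    have k2: "(2::nat) \<in> {1..N}" using N3 by auto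
    have t: "0 < \<theta> l" "\<theta> l < pi" using True unfolding \<theta>_def
      by (auto simp: field_simps)
    have "sin (\<theta> l) \<noteq> 0" using sin_gt_zero[OF t] by simp
    then have "f l (z 2) \<noteq> 0" using fval[OF l k2] True by (simp add: V_def s_def)
    then show ?thesis unfolding mu_nonzero_def using k2 by blast
  next
    case False
    have k1: "(1::nat) \<in> {1..N}" using N3 by auto
    have "f l (z 1) = 1" using fval[OF l k1] False by (simp add: V_def s_def)
    then show ?thesis unfolding mu_nonzero_def using k1 by force
  qed
  have part1: "\<forall>l<N. D2 N z (f l) \<and> mu_nonzero N z (f l) \<and> is_mu_laplacian N z (f l) (\<lambda>x. lamf l * f l x)"
    using d1 nzr lap unfolding D2_def by blast
  have part2: "{lam. mu_eigenvalue N z lam} = lamf ` {..<N}"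
  proof (intro set_eqI iffI)
    fix lam assume "lam \<in> {lam. mu_eigenvalue N z lam}"
    then obtain g where g: "D2 N z g" "mu_nonzero N z g" "is_mu_laplacian N z g (\<lambda>x. lam * g x)"
      unfolding mu_eigenvalue_def by blast
    have r: "\<forall>k\<in>{1..N}. lam * (g \<circ> z) k = real N ^ 2 * ((g \<circ> z) (nx N k) - 2 * (g \<circ> z) k + (g \<circ> z) (pv N k))"
      using g(3) unfolding A.lap_iff by simp
    have nz: "\<exists>k\<in>{1..N}. (g \<circ> z) k \<noteq> 0" using g(2) unfolding mu_nonzero_def by simp
    obtain l where "l < N" "lam = lamf l" using dft[OF N1 r nz] unfolding lamf_def by blast
    then show "lam \<in> lamf ` {..<N}" by blast
  next
    fix lam assume "lam \<in> lamf ` {..<N}"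
    then obtain l where "l < N" "lam = lamf l" by blast
    then show "lam \<in> {lam. mu_eigenvalue N z lam}"
      using part1 unfolding mu_eigenvalue_def by blast
  qed
  show ?thesis using part1 part2 unfolding lamf_def by simp
qed

end
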